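(* Let $p, q, r$ be positive integers with $p \le q$ and $r \ge 2$, and let $\lambda\in\Lambda^{p,q,r}_{+}$. Then: (1) If $p=q=1$: $\mathcal{F}(\lambda;\Lambda^{1,1,r}) \simeq \mathcal{F}(T^{1,1,r}_{1,1,2}(\lambda);\Lambda^{1,1,2})$ if $\lambda\in\operatorname{Fix}(T^{1,1,2}_{1,1,r}\circ T^{1,1,r}_{1,1,2})$, and $\mathcal{F}(\lambda;\Lambda^{1,1,r})\simeq\mathrm{pt}$ otherwise. (2) If $p=1$ and $q\ge 2$: $\mathcal{F}(\lambda;\Lambda^{1,q,r}) \simeq \mathcal{F}(T^{1,q,r}_{1,2,2}(\lambda);\Lambda^{1,2,2})$ if $\lambda\in\operatorname{Fix}(T^{1,2,2}_{1,q,r}\circ T^{1,q,r}_{1,2,2})$, and $\mathcal{F}(\lambda;\Lambda^{1,q,r})\simeq\mathrm{pt}$ otherwise. (3) If $2\le p\le q$: $\mathcal{F}(\lambda;\Lambda^{p,q,r}) \simeq \mathcal{F}(T^{p,q,r}_{2,2,2}(\lambda);\Lambda^{2,2,2})$ if $\lambda\in\operatorname{Fix}(T^{2,2,2}_{p,q,r}\circ T^{p,q,r}_{2,2,2})$, and $\mathcal{F}(\lambda;\Lambda^{p,q,r})\simeq\mathrm{pt}$ otherwise. Here $\simeq$ is homotopy equivalence and $\mathrm{pt}$ the one-point space.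
   Context: $\mathbb{N}=\{0,1,2,\dots\}$. For an additive commutative monoid $\Lambda$ that is cancellative and has no non-trivial invertible elements, define the partial order $\lambda \le \mu$ iff there is $\nu\in\Lambda$ with $\lambda+\nu=\mu$; $\lambda<\mu$ means $\lambda\le\mu$, $\lambda\ne\mu$. Let $\Lambda_+=\Lambda\setminus\{0\}$. For a poset $P$, $|P|$ is the geometric realization of its order complex and $(x,y)_P=\{z\in P:x<z<y\}$. The Frobenius complex is $\mathcal{F}(\lambda;\Lambda)=|(0,\lambda)_\Lambda|$ for $\lambda\in\Lambda_+$. For positive integers $p,q,r$, $\Lambda^{p,q,r}=\langle a,b,c\mid pa+qb=rc\rangle$ is the quotient of the free commutative monoid $\mathbb{N}a\oplus\mathbb{N}b\oplus\mathbb{N}c$ by the congruence generated by $\lambda+pa+qb\sim\lambda+rc$. For positive integers $p,q$, $\tau^p_q:\mathbb{N}\to\mathbb{N}$ is $\tau^p_q(mp+n)=mq+\min\{n,q-1\}$ ($m\in\mathbb{N}$, $0\le n<p$). For positive integers $p,q,r,s,t,u$, the transition map $T^{p,q,r}_{s,t,u}:\Lambda^{p,q,r}\to\Lambda^{s,t,u}$ is $T^{p,q,r}_{s,t,u}(ma+nb+kc)=\tau^p_s(m)a+\tau^q_t(n)b+\tau^r_u(k)c$. For a function $f$ on a set $X$, $\operatorname{Fix} f=\{x\in X:f(x)=x\}$. *)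

theory Defs
  imports "HOL-Analysis.Analysis"
begin

type_synonym triple = "nat \<times> nat \<times> nat"

text \<open>Elements m a + n b + k c of the free commutative monoid N a + N b + N c
  are represented as triples (m, n, k).\<close>

definition tadd :: "triple \<Rightarrow> triple \<Rightarrow> triple" where
  "tadd x y = (case x of (m, n, k) \<Rightarrow> case y of (m', n', k') \<Rightarrow> (m + m', n + n', k + k'))"

definition rstep :: "nat \<Rightarrow> nat \<Rightarrow> nat \<Rightarrow> triple \<Rightarrow> triple \<Rightarrow> bool" where
  "rstep p q r x y \<longleftrightarrow> (\<exists>l. (x = tadd l (p, q, 0) \<and> y = tadd l (0, 0, r))
                           \<or> (y = tadd l (p, q, 0) \<and> x = tadd l (0, 0, r)))"

text \<open>The congruence generated by the relation (its equivalence closure, which is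
  already compatible with addition since the generating relation is translation invariant).\<close>
definition lrel :: "nat \<Rightarrow> nat \<Rightarrow> nat \<Rightarrow> triple \<Rightarrow> triple \<Rightarrow> bool" where
  "lrel p q r = (rstep p q r)\<^sup>*\<^sup>*"

definition cls :: "nat \<Rightarrow> nat \<Rightarrow> nat \<Rightarrow> triple \<Rightarrow> triple set" where
  "cls p q r x = {y. lrel p q r x y}"

definition Lam :: "nat \<Rightarrow> nat \<Rightarrow> nat \<Rightarrow> triple set set" where
  "Lam p q r = range (cls p q r)"

definition Lzero :: "nat \<Rightarrow> nat \<Rightarrow> nat \<Rightarrow> triple set" where
  "Lzero p q r = cls p q r (0, 0, 0)"

definition Lplus :: "nat \<Rightarrow> nat \<Rightarrow> nat \<Rightarrow> triple set set" where
  "Lplus p q r = Lam p q r - {Lzero p q r}"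

definition Lle :: "nat \<Rightarrow> nat \<Rightarrow> nat \<Rightarrow> triple set \<Rightarrow> triple set \<Rightarrow> bool" where
  "Lle p q r X Y \<longleftrightarrow> (\<exists>x z. X = cls p q r x \<and> Y = cls p q r (tadd x z))"

definition Lless :: "nat \<Rightarrow> nat \<Rightarrow> nat \<Rightarrow> triple set \<Rightarrow> triple set \<Rightarrow> bool" where
  "Lless p q r X Y \<longleftrightarrow> Lle p q r X Y \<and> X \<noteq> Y"

definition open_interval :: "'a set \<Rightarrow> ('a \<Rightarrow> 'a \<Rightarrow> bool) \<Rightarrow> 'a \<Rightarrow> 'a \<Rightarrow> 'a set" where
  "open_interval P lt x y = {z \<in> P. lt x z \<and> lt z y}"

text \<open>Geometric realization of the order complex of a poset (P, \<le>): points are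
  finitely supported convex combinations of vertices whose support is a chain,
  topologised as a subspace of R^P (this is the usual realization for finite P).\<close>
definition order_complex_realization :: "'a set \<Rightarrow> ('a \<Rightarrow> 'a \<Rightarrow> bool) \<Rightarrow> ('a \<Rightarrow> real) topology" where
  "order_complex_realization P le =
     subtopology (product_topology (\<lambda>_. euclideanreal) P)
       {t \<in> extensional P.
          (\<forall>x\<in>P. 0 \<le> t x) \<and>
          finite {x \<in> P. t x \<noteq> 0} \<and>
          sum t {x \<in> P. t x \<noteq> 0} = 1 \<and>
          (\<forall>x\<in>P. \<forall>y\<in>P. t x \<noteq> 0 \<and> t y \<noteq> 0 \<longrightarrow> le x y \<or> le y x)}"

definition frobenius_complex :: "nat \<Rightarrow> nat \<Rightarrow> nat \<Rightarrow> triple set \<Rightarrow> (triple set \<Rightarrow> real) topology" where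
  "frobenius_complex p q r lam =
     order_complex_realization (open_interval (Lam p q r) (Lless p q r) (Lzero p q r) lam) (Lle p q r)"

definition tau :: "nat \<Rightarrow> nat \<Rightarrow> nat \<Rightarrow> nat" where
  "tau p q x = (x div p) * q + min (x mod p) (q - 1)"

definition transition :: "nat \<Rightarrow> nat \<Rightarrow> nat \<Rightarrow> nat \<Rightarrow> nat \<Rightarrow> nat \<Rightarrow> triple set \<Rightarrow> triple set" where
  "transition p q r s t u X =
     (case (SOME x. x \<in> X) of (m, n, k) \<Rightarrow> cls s t u (tau p s m, tau q t n, tau r u k))"

definition point_space :: "unit topology" where
  "point_space = discrete_topology {()}"

end

theory Submission
  imports Defs
begin


definition RS :: "'a set \<Rightarrow> ('a \<Rightarrow> 'a \<Rightarrow> bool) \<Rightarrow> ('a \<Rightarrow> real) set" where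
  "RS P le = {t \<in> extensional P.
          (\<forall>x\<in>P. 0 \<le> t x) \<and>
          finite {x \<in> P. t x \<noteq> 0} \<and>
          sum t {x \<in> P. t x \<noteq> 0} = 1 \<and>
          (\<forall>x\<in>P. \<forall>y\<in>P. t x \<noteq> 0 \<and> t y \<noteq> 0 \<longrightarrow> le x y \<or> le y x)}"

lemma ocr_eq: "order_complex_realization P le = subtopology (product_topology (\<lambda>_. euclideanreal) P) (RS P le)"
  unfolding order_complex_realization_def RS_def by simp

lemma topspace_ocr: "topspace (order_complex_realization P le) = RS P le"
  unfolding ocr_eq by (auto simp: RS_def PiE_def)

lemma RS_iff:
  assumes "finite P"
  shows "t \<in> RS P le \<longleftrightarrow> t \<in> extensional P \<and> (\<forall>x\<in>P. 0 \<le> t x) \<and> sum t P = 1 \<and>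
          (\<forall>x\<in>P. \<forall>y\<in>P. t x \<noteq> 0 \<and> t y \<noteq> 0 \<longrightarrow> le x y \<or> le y x)"
proof -
  have "sum t {x \<in> P. t x \<noteq> 0} = sum t P"
    using assms by (intro sum.mono_neutral_left) simp_all
  then show ?thesis using assms unfolding RS_def by (simp add: finite_subset)
qed

definition rmap :: "'a set \<Rightarrow> 'b set \<Rightarrow> ('a \<Rightarrow> 'b) \<Rightarrow> ('a \<Rightarrow> real) \<Rightarrow> ('b \<Rightarrow> real)" where
  "rmap P Q g t = restrict (\<lambda>y. sum t {x\<in>P. g x = y}) Q"

definition aa :: "'a set \<Rightarrow> ('a \<Rightarrow> 'a \<Rightarrow> bool) \<Rightarrow> real \<Rightarrow> ('a \<Rightarrow> real) \<Rightarrow> 'a \<Rightarrow> real" where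
  "aa P le s t x = min (t x) (max 0 (s - sum t {y\<in>P. le x y \<and> y \<noteq> x}))"

definition hmix :: "'a set \<Rightarrow> ('a \<Rightarrow> 'a \<Rightarrow> bool) \<Rightarrow> 'b set \<Rightarrow> ('a \<Rightarrow> 'b) \<Rightarrow> ('a \<Rightarrow> 'b)
   \<Rightarrow> real \<times> ('a \<Rightarrow> real) \<Rightarrow> ('b \<Rightarrow> real)" where
  "hmix P le Q g h st = restrict (\<lambda>z. sum (\<lambda>x. aa P le (fst st) (snd st) x) {x\<in>P. h x = z}
        + sum (\<lambda>x. snd st x - aa P le (fst st) (snd st) x) {x\<in>P. g x = z}) Q"

lemma hmix_cont:
  assumes "finite P"
  shows "continuous_map (prod_topology (top_of_set {0..1}) (order_complex_realization P le))
           (product_topology (\<lambda>_. euclideanreal) Q) (hmix P le Q g h)"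
proof -
  have proj: "continuous_map (prod_topology (top_of_set {0..1}) (order_complex_realization P le))
       euclideanreal (\<lambda>st. snd st x)" if "x \<in> P" for x
  proof -
    have "continuous_map (order_complex_realization P le) euclideanreal (\<lambda>t. t x)"
      unfolding ocr_eq using that
      by (intro continuous_map_from_subtopology continuous_map_product_projection)
    from continuous_map_compose[OF continuous_map_snd this] show ?thesis by (simp add: o_def)
  qed
  have fstc: "continuous_map (prod_topology (top_of_set {0..1}) (order_complex_realization P le))
       euclideanreal (\<lambda>st. fst st)"
    by (rule continuous_map_into_fulltopology[OF continuous_map_fst])
  have aac: "continuous_map (prod_topology (top_of_set {0..1}) (order_complex_realization P le))
       euclideanreal (\<lambda>st. aa P le (fst st) (snd st) x)" if "x \<in> P" for x
    unfolding aa_def using that assms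
    by (intro continuous_map_real_min continuous_map_real_max continuous_map_diff continuous_map_sum proj fstc) auto
  show ?thesis
    unfolding continuous_map_componentwise
  proof (intro conjI ballI)
    show "hmix P le Q g h ` topspace (prod_topology (top_of_set {0..1}) (order_complex_realization P le)) \<subseteq> extensional Q"
      unfolding hmix_def by (rule image_subsetI) (rule restrict_extensional)
    fix k assume "k \<in> Q"
    then show "continuous_map (prod_topology (top_of_set {0..1}) (order_complex_realization P le)) euclideanreal
         (\<lambda>x. hmix P le Q g h x k)"
      unfolding hmix_def restrict_apply'[OF \<open>k \<in> Q\<close>] using assms
      by (intro continuous_map_add continuous_map_diff continuous_map_sum aac proj) auto
  qed
qed

lemma aa_bounds:
  assumes "0 \<le> t x" shows "0 \<le> aa P le s t x" "aa P le s t x \<le> t x"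
  using assms unfolding aa_def by auto

lemma S_mono:
  fixes t :: "'a \<Rightarrow> real"
  assumes fin: "finite P" and nn: "\<forall>y\<in>P. 0 \<le> t y"
    and tr: "\<And>x y z. x\<in>P \<Longrightarrow> y\<in>P \<Longrightarrow> z\<in>P \<Longrightarrow> le x y \<Longrightarrow> le y z \<Longrightarrow> le x z"
    and an: "\<And>x y. x\<in>P \<Longrightarrow> y\<in>P \<Longrightarrow> le x y \<Longrightarrow> le y x \<Longrightarrow> x = y"
    and x1: "x1 \<in> P" and x2: "x2 \<in> P" and l: "le x1 x2" and ne: "x1 \<noteq> x2"
  shows "t x2 + sum t {y\<in>P. le x2 y \<and> y \<noteq> x2} \<le> sum t {y\<in>P. le x1 y \<and> y \<noteq> x1}"
proof -
  have sub: "insert x2 {y\<in>P. le x2 y \<and> y \<noteq> x2} \<subseteq> {y\<in>P. le x1 y \<and> y \<noteq> x1}"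
    using x1 x2 l ne tr an by blast
  have "t x2 + sum t {y\<in>P. le x2 y \<and> y \<noteq> x2} = sum t (insert x2 {y\<in>P. le x2 y \<and> y \<noteq> x2})"
    using fin by (subst sum.insert) auto
  also have "\<dots> \<le> sum t {y\<in>P. le x1 y \<and> y \<noteq> x1}"
    by (rule sum_mono2) (use fin sub nn in auto)
  finally show ?thesis .
qed

lemma aa_key:
  assumes fin: "finite P" and nn: "\<forall>y\<in>P. 0 \<le> t y"
    and tr: "\<And>x y z. x\<in>P \<Longrightarrow> y\<in>P \<Longrightarrow> z\<in>P \<Longrightarrow> le x y \<Longrightarrow> le y z \<Longrightarrow> le x z"
    and an: "\<And>x y. x\<in>P \<Longrightarrow> y\<in>P \<Longrightarrow> le x y \<Longrightarrow> le y x \<Longrightarrow> x = y"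
    and x1: "x1 \<in> P" and x2: "x2 \<in> P" and l: "le x1 x2" and ne: "x1 \<noteq> x2"
    and a1: "aa P le s t x1 \<noteq> 0"
  shows "aa P le s t x2 = t x2"
proof -
  have "t x2 + sum t {y\<in>P. le x2 y \<and> y \<noteq> x2} \<le> sum t {y\<in>P. le x1 y \<and> y \<noteq> x1}"
    by (rule S_mono[of P t le x1 x2, OF fin nn tr an x1 x2 l ne])
  moreover have "s - sum t {y\<in>P. le x1 y \<and> y \<noteq> x1} > 0"
    using a1 nn x1 unfolding aa_def by (auto simp: min_def max_def split: if_splits)
  ultimately show ?thesis unfolding aa_def by auto
qed

lemma aa_zero:
  assumes fin: "finite P" and nn: "\<forall>y\<in>P. 0 \<le> t y" and x: "x \<in> P"
  shows "aa P le 0 t x = 0"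
proof -
  have "0 \<le> sum t {y\<in>P. le x y \<and> y \<noteq> x}" using nn by (intro sum_nonneg) auto
  then show ?thesis using nn x unfolding aa_def by auto
qed

lemma aa_one:
  assumes fin: "finite P" and nn: "\<forall>y\<in>P. 0 \<le> t y" and x: "x \<in> P" and s1: "sum t P = 1"
  shows "aa P le 1 t x = t x"
proof -
  have "t x + sum t {y\<in>P. le x y \<and> y \<noteq> x} = sum t (insert x {y\<in>P. le x y \<and> y \<noteq> x})"
    using fin by (subst sum.insert) auto
  also have "\<dots> \<le> sum t P"
    by (rule sum_mono2) (use fin nn x in auto)
  finally show ?thesis using s1 nn x unfolding aa_def by auto
qed

lemma sum_nz_ex: "sum f A \<noteq> (0::real) \<Longrightarrow> \<exists>x\<in>A. f x \<noteq> 0"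
  by (meson sum.neutral)

lemma hmix_in:
  assumes finP: "finite P" and finQ: "finite Q"
    and tr: "\<And>x y z. x\<in>P \<Longrightarrow> y\<in>P \<Longrightarrow> z\<in>P \<Longrightarrow> le x y \<Longrightarrow> le y z \<Longrightarrow> le x z"
    and an: "\<And>x y. x\<in>P \<Longrightarrow> y\<in>P \<Longrightarrow> le x y \<Longrightarrow> le y x \<Longrightarrow> x = y"
    and rf': "\<And>x. x\<in>Q \<Longrightarrow> le' x x"
    and tr': "\<And>x y z. x\<in>Q \<Longrightarrow> y\<in>Q \<Longrightarrow> z\<in>Q \<Longrightarrow> le' x y \<Longrightarrow> le' y z \<Longrightarrow> le' x z"
    and gQ: "g ` P \<subseteq> Q" and hQ: "h ` P \<subseteq> Q"
    and gm: "\<And>x y. x\<in>P \<Longrightarrow> y\<in>P \<Longrightarrow> le x y \<Longrightarrow> le' (g x) (g y)"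
    and hm: "\<And>x y. x\<in>P \<Longrightarrow> y\<in>P \<Longrightarrow> le x y \<Longrightarrow> le' (h x) (h y)"
    and gh: "\<And>x. x\<in>P \<Longrightarrow> le' (g x) (h x)"
    and t: "t \<in> RS P le"
  shows "hmix P le Q g h (s, t) \<in> RS Q le'"
proof -
  define a where "a = aa P le s t"
  have tP: "t \<in> extensional P" "\<forall>x\<in>P. 0 \<le> t x" "sum t P = 1"
    and ch: "\<forall>x\<in>P. \<forall>y\<in>P. t x \<noteq> 0 \<and> t y \<noteq> 0 \<longrightarrow> le x y \<or> le y x"
    using t finP by (auto simp: RS_iff)
  have ab: "0 \<le> a x" "a x \<le> t x" if "x \<in> P" for x
    using aa_bounds[of t x P le s] tP that unfolding a_def by auto
  have H: "hmix P le Q g h (s, t) = restrict (\<lambda>z. sum a {x\<in>P. h x = z} + sum (\<lambda>x. t x - a x) {x\<in>P. g x = z}) Q"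
    unfolding hmix_def a_def by simp
  define H where "H = hmix P le Q g h (s, t)"
  have Hz: "H z = sum a {x\<in>P. h x = z} + sum (\<lambda>x. t x - a x) {x\<in>P. g x = z}" if "z \<in> Q" for z
    using that unfolding H_def H by simp
  have ext: "H \<in> extensional Q" unfolding H_def H by simp
  have nn: "\<forall>z\<in>Q. 0 \<le> H z"
    using ab by (auto simp: Hz intro!: add_nonneg_nonneg sum_nonneg)
  have "sum H Q = sum (\<lambda>z. sum a {x\<in>P. h x = z}) Q + sum (\<lambda>z. sum (\<lambda>x. t x - a x) {x\<in>P. g x = z}) Q"
    by (simp add: Hz sum.distrib)
  also have "\<dots> = sum a P + sum (\<lambda>x. t x - a x) P"
    using sum.group[OF finP finQ hQ, of a] sum.group[OF finP finQ gQ, of "\<lambda>x. t x - a x"] by simp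
  also have "\<dots> = 1" using tP by (simp add: sum.distrib[symmetric] sum_subtractf)
  finally have s1: "sum H Q = 1" .
  have supp: "(\<exists>x\<in>P. h x = z \<and> a x \<noteq> 0) \<or> (\<exists>x\<in>P. g x = z \<and> t x - a x \<noteq> 0)"
    if "z \<in> Q" "H z \<noteq> 0" for z
  proof -
    have "sum a {x\<in>P. h x = z} \<noteq> 0 \<or> sum (\<lambda>x. t x - a x) {x\<in>P. g x = z} \<noteq> 0"
      using that Hz by auto
    then show ?thesis by (auto dest!: sum_nz_ex)
  qed
  have key: "a x2 = t x2" if "x1 \<in> P" "x2 \<in> P" "le x1 x2" "x1 \<noteq> x2" "a x1 \<noteq> 0" for x1 x2
    unfolding a_def
    apply (rule aa_key[of P t le x1 x2 s])
    using finP tP that unfolding a_def apply simp_all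
    apply (rule tr; assumption)
    apply (rule an; assumption)
    done
  have tnz: "t x \<noteq> 0" if "x \<in> P" "a x \<noteq> 0" for x using ab[OF that(1)] that by auto
  have tnz2: "t x \<noteq> 0" if "x \<in> P" "t x - a x \<noteq> 0" for x using ab[OF that(1)] that by auto
  have mixed: "le' (g x2) (h x1)" if "x1 \<in> P" "x2 \<in> P" "a x1 \<noteq> 0" "t x2 - a x2 \<noteq> 0" for x1 x2
  proof -
    have c: "le x1 x2 \<or> le x2 x1" using ch that tnz tnz2 by blast
    show ?thesis
    proof (cases "x1 = x2")
      case True then show ?thesis using gh that by simp
    next
      case False
      have "\<not> le x1 x2" using key[of x1 x2] that False by auto
      then have "le x2 x1" using c by simp
      then show ?thesis using tr'[of "g x2" "g x1" "h x1"] gm gh that gQ hQ by blast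
    qed
  qed
  have chain: "\<forall>z1\<in>Q. \<forall>z2\<in>Q. H z1 \<noteq> 0 \<and> H z2 \<noteq> 0 \<longrightarrow> le' z1 z2 \<or> le' z2 z1"
  proof (intro ballI impI)
    fix z1 z2 assume z: "z1 \<in> Q" "z2 \<in> Q" "H z1 \<noteq> 0 \<and> H z2 \<noteq> 0"
    obtain x1 where x1: "x1 \<in> P" "(h x1 = z1 \<and> a x1 \<noteq> 0) \<or> (g x1 = z1 \<and> t x1 - a x1 \<noteq> 0)"
      using supp[of z1] z by blast
    obtain x2 where x2: "x2 \<in> P" "(h x2 = z2 \<and> a x2 \<noteq> 0) \<or> (g x2 = z2 \<and> t x2 - a x2 \<noteq> 0)"
      using supp[of z2] z by blast
    have c: "le x1 x2 \<or> le x2 x1" using ch x1 x2 tnz tnz2 by metis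
    show "le' z1 z2 \<or> le' z2 z1"
      using x1(2) x2(2)
    proof (elim disjE conjE)
      assume "h x1 = z1" "a x1 \<noteq> 0" "h x2 = z2" "a x2 \<noteq> 0"
      then show ?thesis using c hm x1(1) x2(1) by metis
    next
      assume "h x1 = z1" "a x1 \<noteq> 0" "g x2 = z2" "t x2 - a x2 \<noteq> 0"
      then show ?thesis using mixed x1(1) x2(1) by blast
    next
      assume "g x1 = z1" "t x1 - a x1 \<noteq> 0" "h x2 = z2" "a x2 \<noteq> 0"
      then show ?thesis using mixed x1(1) x2(1) by blast
    next
      assume "g x1 = z1" "t x1 - a x1 \<noteq> 0" "g x2 = z2" "t x2 - a x2 \<noteq> 0"
      then show ?thesis using c gm x1(1) x2(1) by metis
    qed
  qed
  show ?thesis unfolding H_def[symmetric] RS_iff[OF finQ] using ext nn s1 chain by blast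
qed

lemma hmix_0:
  assumes "finite P" "t \<in> RS P le"
  shows "hmix P le Q g h (0, t) = rmap P Q g t"
proof -
  have tP: "\<forall>x\<in>P. 0 \<le> t x" using assms by (auto simp: RS_iff)
  show ?thesis unfolding hmix_def rmap_def
    using aa_zero[OF assms(1) tP] by (intro restrict_ext) simp
qed

lemma hmix_1:
  assumes "finite P" "t \<in> RS P le"
  shows "hmix P le Q g h (1, t) = rmap P Q h t"
proof -
  have tP: "\<forall>x\<in>P. 0 \<le> t x" "sum t P = 1" using assms by (auto simp: RS_iff)
  show ?thesis unfolding hmix_def rmap_def
    using aa_one[OF assms(1) tP(1) _ tP(2)] by (intro restrict_ext) simp
qed

lemma rmap_homotopic:
  assumes finP: "finite P" and finQ: "finite Q"
    and tr: "\<And>x y z. x\<in>P \<Longrightarrow> y\<in>P \<Longrightarrow> z\<in>P \<Longrightarrow> le x y \<Longrightarrow> le y z \<Longrightarrow> le x z"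
    and an: "\<And>x y. x\<in>P \<Longrightarrow> y\<in>P \<Longrightarrow> le x y \<Longrightarrow> le y x \<Longrightarrow> x = y"
    and rf': "\<And>x. x\<in>Q \<Longrightarrow> le' x x"
    and tr': "\<And>x y z. x\<in>Q \<Longrightarrow> y\<in>Q \<Longrightarrow> z\<in>Q \<Longrightarrow> le' x y \<Longrightarrow> le' y z \<Longrightarrow> le' x z"
    and gQ: "g ` P \<subseteq> Q" and hQ: "h ` P \<subseteq> Q"
    and gm: "\<And>x y. x\<in>P \<Longrightarrow> y\<in>P \<Longrightarrow> le x y \<Longrightarrow> le' (g x) (g y)"
    and hm: "\<And>x y. x\<in>P \<Longrightarrow> y\<in>P \<Longrightarrow> le x y \<Longrightarrow> le' (h x) (h y)"
    and gh: "\<And>x. x\<in>P \<Longrightarrow> le' (g x) (h x)"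
  shows "homotopic_with (\<lambda>_. True) (order_complex_realization P le) (order_complex_realization Q le')
           (rmap P Q g) (rmap P Q h)"
proof -
  have cont: "continuous_map (prod_topology (top_of_set {0..1}) (order_complex_realization P le))
       (order_complex_realization Q le') (hmix P le Q g h)"
    unfolding ocr_eq[of Q le'] continuous_map_in_subtopology
  proof
    show "continuous_map (prod_topology (top_of_set {0..1}) (order_complex_realization P le)) (powertop_real Q) (hmix P le Q g h)"
      by (rule hmix_cont[OF finP])
    show "hmix P le Q g h \<in> topspace (prod_topology (top_of_set {0..1}) (order_complex_realization P le)) \<rightarrow> RS Q le'"
    proof
      fix st assume "st \<in> topspace (prod_topology (top_of_set {0..1::real}) (order_complex_realization P le))"
      then have "snd st \<in> RS P le" by (auto simp: topspace_ocr)
      from hmix_in[OF finP finQ tr an rf' tr' gQ hQ gm hm gh this, where s="fst st"]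
      show "hmix P le Q g h st \<in> RS Q le'" by simp
    qed
  qed
  have "homotopic_with (\<lambda>_. True) (order_complex_realization P le) (order_complex_realization Q le')
           (\<lambda>t. hmix P le Q g h (0, t)) (\<lambda>t. hmix P le Q g h (1, t))"
    unfolding homotopic_with_def using cont by blast
  then show ?thesis
    apply (rule homotopic_with_eq)
    subgoal for t unfolding topspace_ocr by (rule hmix_0[OF finP, symmetric])
    subgoal for t unfolding topspace_ocr by (rule hmix_1[OF finP, symmetric])
    by simp
qed

lemma rmap_cong: "(\<And>x. x \<in> P \<Longrightarrow> g x = g' x) \<Longrightarrow> rmap P Q g = rmap P Q g'"
proof -
  assume a: "\<And>x. x \<in> P \<Longrightarrow> g x = g' x"
  have "\<And>y. {x\<in>P. g x = y} = {x\<in>P. g' x = y}" using a by auto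
  then show ?thesis unfolding rmap_def by simp
qed

lemma rmap_id:
  assumes "t \<in> extensional P"
  shows "rmap P P (\<lambda>x. x) t = t"
proof (rule ext)
  fix z show "rmap P P (\<lambda>x. x) t z = t z"
  proof (cases "z \<in> P")
    case True
    have e: "{x\<in>P. x = z} = {z}" using True by auto
    have "rmap P P (\<lambda>x. x) t z = sum t {x\<in>P. x = z}" using True unfolding rmap_def by (rule restrict_apply')
    also have "\<dots> = t z" unfolding e by simp
    finally show ?thesis .
  next
    case False
    have "rmap P P (\<lambda>x. x) t z = undefined" using False unfolding rmap_def by (simp add: restrict_def)
    also have "\<dots> = t z" using extensional_arb[OF assms False] by simp
    finally show ?thesis .
  qed
qed

lemma rmap_comp:
  assumes finP: "finite P" and finQ: "finite Q" and gQ: "g ` P \<subseteq> Q"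
  shows "rmap Q R h (rmap P Q g t) = rmap P R (\<lambda>x. h (g x)) t"
proof (rule ext)
  fix z show "rmap Q R h (rmap P Q g t) z = rmap P R (\<lambda>x. h (g x)) t z"
  proof (cases "z \<in> R")
    case True
    have "rmap Q R h (rmap P Q g t) z = sum (rmap P Q g t) {y\<in>Q. h y = z}"
      using True by (simp add: rmap_def)
    also have "\<dots> = sum (\<lambda>y. sum t {x\<in>P. g x = y}) {y\<in>Q. h y = z}"
      by (rule sum.cong[OF refl]) (simp add: rmap_def)
    also have "\<dots> = sum (\<lambda>y. sum t {x\<in>{x\<in>P. h (g x) = z}. g x = y}) {y\<in>Q. h y = z}"
    proof (rule sum.cong[OF refl])
      fix y assume "y \<in> {y\<in>Q. h y = z}"
      then have "{x\<in>{x\<in>P. h (g x) = z}. g x = y} = {x\<in>P. g x = y}" by auto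
      then show "sum t {x\<in>P. g x = y} = sum t {x\<in>{x\<in>P. h (g x) = z}. g x = y}" by simp
    qed
    also have "\<dots> = sum t {x\<in>P. h (g x) = z}"
      by (rule sum.group) (use finP finQ gQ in auto)
    finally show ?thesis using True unfolding rmap_def by simp
  next
    case False then show ?thesis unfolding rmap_def by simp
  qed
qed

lemma rmap_cont:
  assumes finP: "finite P" and finQ: "finite Q"
    and tr: "\<And>x y z. x\<in>P \<Longrightarrow> y\<in>P \<Longrightarrow> z\<in>P \<Longrightarrow> le x y \<Longrightarrow> le y z \<Longrightarrow> le x z"
    and an: "\<And>x y. x\<in>P \<Longrightarrow> y\<in>P \<Longrightarrow> le x y \<Longrightarrow> le y x \<Longrightarrow> x = y"
    and rf': "\<And>x. x\<in>Q \<Longrightarrow> le' x x"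
    and tr': "\<And>x y z. x\<in>Q \<Longrightarrow> y\<in>Q \<Longrightarrow> z\<in>Q \<Longrightarrow> le' x y \<Longrightarrow> le' y z \<Longrightarrow> le' x z"
    and gQ: "g ` P \<subseteq> Q"
    and gm: "\<And>x y. x\<in>P \<Longrightarrow> y\<in>P \<Longrightarrow> le x y \<Longrightarrow> le' (g x) (g y)"
  shows "continuous_map (order_complex_realization P le) (order_complex_realization Q le') (rmap P Q g)"
proof -
  have "homotopic_with (\<lambda>_. True) (order_complex_realization P le) (order_complex_realization Q le')
           (rmap P Q g) (rmap P Q g)"
    apply (rule rmap_homotopic[OF finP finQ _ _ _ _ gQ gQ])
         apply (rule tr; assumption)
        apply (rule an; assumption)
       apply (rule rf'; assumption)
      apply (rule tr'; assumption)
     apply (rule gm; assumption)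
    apply (rule gm; assumption)
    using rf' gQ by blast
  then show ?thesis using homotopic_with_imp_continuous_maps by blast
qed

lemma RS_ext: "t \<in> RS P le \<Longrightarrow> t \<in> extensional P"
  unfolding RS_def by simp

lemma he_lemma:
  assumes finP: "finite P" and finQ: "finite Q"
    and rf: "\<And>x. x\<in>P \<Longrightarrow> le x x"
    and tr: "\<And>x y z. x\<in>P \<Longrightarrow> y\<in>P \<Longrightarrow> z\<in>P \<Longrightarrow> le x y \<Longrightarrow> le y z \<Longrightarrow> le x z"
    and an: "\<And>x y. x\<in>P \<Longrightarrow> y\<in>P \<Longrightarrow> le x y \<Longrightarrow> le y x \<Longrightarrow> x = y"
    and rf': "\<And>x. x\<in>Q \<Longrightarrow> le' x x"
    and tr': "\<And>x y z. x\<in>Q \<Longrightarrow> y\<in>Q \<Longrightarrow> z\<in>Q \<Longrightarrow> le' x y \<Longrightarrow> le' y z \<Longrightarrow> le' x z"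
    and an': "\<And>x y. x\<in>Q \<Longrightarrow> y\<in>Q \<Longrightarrow> le' x y \<Longrightarrow> le' y x \<Longrightarrow> x = y"
    and gQ: "g ` P \<subseteq> Q" and hP: "h ` Q \<subseteq> P"
    and gm: "\<And>x y. x\<in>P \<Longrightarrow> y\<in>P \<Longrightarrow> le x y \<Longrightarrow> le' (g x) (g y)"
    and hm: "\<And>x y. x\<in>Q \<Longrightarrow> y\<in>Q \<Longrightarrow> le' x y \<Longrightarrow> le (h x) (h y)"
    and gh: "\<And>y. y\<in>Q \<Longrightarrow> g (h y) = y"
    and hg: "\<And>x. x\<in>P \<Longrightarrow> le (h (g x)) x"
  shows "order_complex_realization P le homotopy_equivalent_space order_complex_realization Q le'"
proof -
  have cf: "continuous_map (order_complex_realization P le) (order_complex_realization Q le') (rmap P Q g)"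
    apply (rule rmap_cont[OF finP finQ _ _ _ _ gQ])
    apply (rule tr; assumption)
    apply (rule an; assumption)
    apply (rule rf'; assumption)
    apply (rule tr'; assumption)
    apply (rule gm; assumption)
    done
  have ck: "continuous_map (order_complex_realization Q le') (order_complex_realization P le) (rmap Q P h)"
    apply (rule rmap_cont[OF finQ finP _ _ _ _ hP])
    apply (rule tr'; assumption)
    apply (rule an'; assumption)
    apply (rule rf; assumption)
    apply (rule tr; assumption)
    apply (rule hm; assumption)
    done
  have hgP: "(\<lambda>x. h (g x)) ` P \<subseteq> P" using gQ hP by auto
  have H1: "homotopic_with (\<lambda>_. True) (order_complex_realization P le) (order_complex_realization P le)
       (rmap P P (\<lambda>x. h (g x))) (rmap P P (\<lambda>x. x))"
    apply (rule rmap_homotopic[OF finP finP _ _ _ _ hgP])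
    apply (rule tr; assumption)
    apply (rule an; assumption)
    apply (rule rf; assumption)
    apply (rule tr; assumption)
    apply blast
    subgoal for x y using hm[of "g x" "g y"] gm[of x y] gQ by blast
    apply blast
    by (rule hg)
  have H1': "homotopic_with (\<lambda>_. True) (order_complex_realization P le) (order_complex_realization P le)
       (rmap Q P h \<circ> rmap P Q g) id"
    apply (rule homotopic_with_eq[OF H1])
    subgoal for t using rmap_comp[OF finP finQ gQ] by simp
    subgoal for t using rmap_id[OF RS_ext, of t P le] by (simp add: topspace_ocr)
    by simp
  have H2: "homotopic_with (\<lambda>_. True) (order_complex_realization Q le') (order_complex_realization Q le') id id"
    by simp
  have H2': "homotopic_with (\<lambda>_. True) (order_complex_realization Q le') (order_complex_realization Q le')
       (rmap P Q g \<circ> rmap Q P h) id"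
  proof (rule homotopic_with_eq[OF H2])
    fix t assume t: "t \<in> topspace (order_complex_realization Q le')"
    have "(rmap P Q g \<circ> rmap Q P h) t = rmap Q Q (\<lambda>y. g (h y)) t"
      using rmap_comp[OF finQ finP hP] by simp
    also have "\<dots> = rmap Q Q (\<lambda>y. y) t" using gh by (metis rmap_cong)
    also have "\<dots> = t" using rmap_id[OF RS_ext, of t Q le'] t by (simp add: topspace_ocr)
    finally show "(rmap P Q g \<circ> rmap Q P h) t = id t" by simp
  qed auto
  show ?thesis unfolding homotopy_equivalent_space_def using cf ck H1' H2' by blast
qed

lemma contr_lemma:
  assumes finP: "finite P"
    and rf: "\<And>x. x\<in>P \<Longrightarrow> le x x"
    and tr: "\<And>x y z. x\<in>P \<Longrightarrow> y\<in>P \<Longrightarrow> z\<in>P \<Longrightarrow> le x y \<Longrightarrow> le y z \<Longrightarrow> le x z"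
    and an: "\<And>x y. x\<in>P \<Longrightarrow> y\<in>P \<Longrightarrow> le x y \<Longrightarrow> le y x \<Longrightarrow> x = y"
    and fP: "f ` P \<subseteq> P"
    and fm: "\<And>x y. x\<in>P \<Longrightarrow> y\<in>P \<Longrightarrow> le x y \<Longrightarrow> le (f x) (f y)"
    and fle: "\<And>x. x\<in>P \<Longrightarrow> le (f x) x"
    and m: "m \<in> P" and fm2: "\<And>x. x\<in>P \<Longrightarrow> le (f x) m"
  shows "order_complex_realization P le homotopy_equivalent_space point_space"
proof -
  define d :: "_ \<Rightarrow> real" where "d = restrict (\<lambda>y. if y = m then 1 else 0) P"
  have "sum d P = sum (\<lambda>y. if y = m then 1 else 0) P" unfolding d_def by (rule sum.cong) auto
  also have "\<dots> = 1" using finP m by simp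
  finally have "sum d P = 1" .
  then have dR: "d \<in> RS P le" unfolding RS_iff[OF finP] using rf m by (auto simp: d_def)
  have mP: "(\<lambda>_. m) ` P \<subseteq> P" using m by auto
  have cP: "continuous_map (order_complex_realization P le) point_space (\<lambda>_. ())"
    by (simp add: point_space_def)
  have cG: "continuous_map point_space (order_complex_realization P le) (\<lambda>_. d)"
    using dR by (simp add: point_space_def topspace_ocr)
  have A: "homotopic_with (\<lambda>_. True) (order_complex_realization P le) (order_complex_realization P le)
       (rmap P P f) (rmap P P (\<lambda>x. x))"
    apply (rule rmap_homotopic[OF finP finP _ _ _ _ fP])
    apply (rule tr; assumption)
    apply (rule an; assumption)
    apply (rule rf; assumption)
    apply (rule tr; assumption)
    apply blast
    apply (rule fm; assumption)
    apply blast
    by (rule fle)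
  have B: "homotopic_with (\<lambda>_. True) (order_complex_realization P le) (order_complex_realization P le)
       (rmap P P f) (rmap P P (\<lambda>_. m))"
    apply (rule rmap_homotopic[OF finP finP _ _ _ _ fP mP])
    apply (rule tr; assumption)
    apply (rule an; assumption)
    apply (rule rf; assumption)
    apply (rule tr; assumption)
    apply (rule fm; assumption)
    apply (rule rf[OF m])
    by (rule fm2)
  have C: "homotopic_with (\<lambda>_. True) (order_complex_realization P le) (order_complex_realization P le)
       (rmap P P (\<lambda>_. m)) (rmap P P (\<lambda>x. x))"
    using homotopic_with_trans[OF B[unfolded homotopic_with_sym[of _ _ _ "rmap P P f"]] A] .
  have C': "homotopic_with (\<lambda>_. True) (order_complex_realization P le) (order_complex_realization P le)
       ((\<lambda>_. d) \<circ> (\<lambda>_. ())) id"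
  proof (rule homotopic_with_eq[OF C])
    fix t assume t: "t \<in> topspace (order_complex_realization P le)"
    then have tR: "t \<in> RS P le" by (simp add: topspace_ocr)
    then have s1: "sum t P = 1" using finP by (simp add: RS_iff)
    show "((\<lambda>_. d) \<circ> (\<lambda>_. ())) t = rmap P P (\<lambda>_. m) t"
    proof (rule ext)
      fix z show "((\<lambda>_. d) \<circ> (\<lambda>_. ())) t z = rmap P P (\<lambda>_. m) t z"
      proof (cases "z \<in> P")
        case True
        show ?thesis
        proof (cases "z = m")
          case True2: True
          have "{x\<in>P. m = z} = P" using True2 by simp
          then show ?thesis using True True2 s1 by (simp add: d_def rmap_def)
        next
          case False
          have "{x\<in>P. m = z} = {}" using False by simp
          then show ?thesis using True False by (simp add: d_def rmap_def)
        qed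
      next
        case False then show ?thesis by (simp add: d_def rmap_def)
      qed
    qed
    show "id t = rmap P P (\<lambda>x. x) t" using rmap_id[OF RS_ext[OF tR]] by simp
  qed auto
  have D: "homotopic_with (\<lambda>_. True) point_space point_space ((\<lambda>_. ()) \<circ> (\<lambda>_. d)) id"
  proof -
    have "((\<lambda>_. ()) \<circ> (\<lambda>_. d)) = (id :: unit \<Rightarrow> unit)" by (rule ext) simp
    then show ?thesis by simp
  qed
  show ?thesis unfolding homotopy_equivalent_space_def using cP cG C' D by blast
qed


definition eqv :: "nat \<Rightarrow> nat \<Rightarrow> nat \<Rightarrow> triple \<Rightarrow> triple \<Rightarrow> bool" where
  "eqv p q r x y \<longleftrightarrow> (\<exists>d::int. int (fst y) = int (fst x) + d * int p \<and>
      int (fst (snd y)) = int (fst (snd x)) + d * int q \<and>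
      int (snd (snd y)) = int (snd (snd x)) - d * int r)"

lemma eqv_refl: "eqv p q r x x"
  unfolding eqv_def by (rule exI[of _ 0]) simp

lemma eqv_sym: "eqv p q r x y \<Longrightarrow> eqv p q r y x"
  unfolding eqv_def
proof (elim exE conjE)
  fix d :: int
  assume "int (fst y) = int (fst x) + d * int p" "int (fst (snd y)) = int (fst (snd x)) + d * int q"
    "int (snd (snd y)) = int (snd (snd x)) - d * int r"
  then show "\<exists>d. int (fst x) = int (fst y) + d * int p \<and>
      int (fst (snd x)) = int (fst (snd y)) + d * int q \<and>
      int (snd (snd x)) = int (snd (snd y)) - d * int r"
    by (intro exI[of _ "- d"]) (simp add: algebra_simps)
qed

lemma eqv_trans: "eqv p q r x y \<Longrightarrow> eqv p q r y z \<Longrightarrow> eqv p q r x z"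
  unfolding eqv_def
proof (elim exE conjE)
  fix d e :: int
  assume "int (fst y) = int (fst x) + d * int p" "int (fst (snd y)) = int (fst (snd x)) + d * int q"
    "int (snd (snd y)) = int (snd (snd x)) - d * int r"
    "int (fst z) = int (fst y) + e * int p" "int (fst (snd z)) = int (fst (snd y)) + e * int q"
    "int (snd (snd z)) = int (snd (snd y)) - e * int r"
  then show "\<exists>d. int (fst z) = int (fst x) + d * int p \<and>
      int (fst (snd z)) = int (fst (snd x)) + d * int q \<and>
      int (snd (snd z)) = int (snd (snd x)) - d * int r"
    by (intro exI[of _ "d + e"]) (simp add: algebra_simps)
qed

lemma rstep_eqv: "rstep p q r x y \<Longrightarrow> eqv p q r x y"
  unfolding rstep_def tadd_def eqv_def
  by (auto split: prod.splits intro: exI[of _ "-1"] exI[of _ 1])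

lemma lrel_eqv: "lrel p q r x y \<Longrightarrow> eqv p q r x y"
  unfolding lrel_def
proof (induction rule: rtranclp_induct)
  case base then show ?case by (rule eqv_refl)
next
  case (step y z) then show ?case using rstep_eqv eqv_trans by blast
qed

lemma shift1: "lrel p q r (a + d*p, b + d*q, c) (a, b, c + d*r)"
proof (induction d arbitrary: c)
  case 0 then show ?case by (simp add: lrel_def)
next
  case (Suc d)
  have "rstep p q r (a + Suc d*p, b + Suc d*q, c) (a + d*p, b + d*q, c + r)"
    unfolding rstep_def tadd_def by (rule exI[of _ "(a + d*p, b + d*q, c)"]) simp
  moreover have "lrel p q r (a + d*p, b + d*q, c + r) (a, b, c + r + d*r)" by (rule Suc)
  ultimately show ?case unfolding lrel_def
    by (metis (no_types, lifting) add.commute add.left_commute converse_rtranclp_into_rtranclp mult_Suc)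
qed

lemma shift2: "lrel p q r (a, b, c + d*r) (a + d*p, b + d*q, c)"
proof (induction d arbitrary: c)
  case 0 then show ?case by (simp add: lrel_def)
next
  case (Suc d)
  have "lrel p q r (a, b, (c + r) + d*r) (a + d*p, b + d*q, c + r)" by (rule Suc)
  moreover have "rstep p q r (a + d*p, b + d*q, c + r) (a + Suc d*p, b + Suc d*q, c)"
    unfolding rstep_def tadd_def by (rule exI[of _ "(a + d*p, b + d*q, c)"]) simp
  ultimately show ?case unfolding lrel_def
    by (metis (no_types, lifting) add.commute add.left_commute rtranclp.rtrancl_into_rtrancl mult_Suc)
qed

lemma eqv_lrel: "eqv p q r x y \<Longrightarrow> lrel p q r x y"
proof -
  obtain m n k where x: "x = (m, n, k)" by (cases x) auto
  obtain m' n' k' where y: "y = (m', n', k')" by (cases y) auto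
  assume "eqv p q r x y"
  then obtain d :: int where d: "int m' = int m + d * int p" "int n' = int n + d * int q" "int k' = int k - d * int r"
    unfolding eqv_def x y by auto
  show ?thesis
  proof (cases "d \<ge> 0")
    case True
    define e where "e = nat d"
    have de: "d = int e" using True e_def by simp
    have "int m' = int (m + e*p)" "int n' = int (n + e*q)" "int k = int (k' + e*r)"
      using d unfolding de by (simp; linarith)+
    then have "m' = m + e*p" "n' = n + e*q" "k = k' + e*r" by (simp_all only: of_nat_eq_iff)
    then show ?thesis unfolding x y using shift2[of p q r m n k' e] by simp
  next
    case False
    define e where "e = nat (-d)"
    have de: "d = - int e" using False e_def by simp
    have "int m = int (m' + e*p)" "int n = int (n' + e*q)" "int k' = int (k + e*r)"
      using d unfolding de by (simp; linarith)+
    then have "m = m' + e*p" "n = n' + e*q" "k' = k + e*r" by (simp_all only: of_nat_eq_iff)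
    then show ?thesis unfolding x y using shift1[of p q r m' e n' k] by simp
  qed
qed

lemma lrel_iff: "lrel p q r x y \<longleftrightarrow> eqv p q r x y"
  using lrel_eqv eqv_lrel by blast

lemma mem_cls: "y \<in> cls p q r x \<longleftrightarrow> eqv p q r x y"
  unfolding cls_def lrel_iff by simp

lemma cls_eq: "cls p q r x = cls p q r y \<longleftrightarrow> eqv p q r x y"
proof
  assume "cls p q r x = cls p q r y"
  then have "y \<in> cls p q r x" using mem_cls eqv_refl by metis
  then show "eqv p q r x y" by (simp add: mem_cls)
next
  assume "eqv p q r x y"
  then show "cls p q r x = cls p q r y"
    unfolding set_eq_iff mem_cls using eqv_sym eqv_trans by blast
qed

lemma eqv_tadd: "eqv p q r x y \<Longrightarrow> eqv p q r (tadd x z) (tadd y z)"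
  unfolding eqv_def tadd_def by (auto split: prod.splits simp: algebra_simps)

lemma Lle_cls: "Lle p q r (cls p q r x) (cls p q r y) \<longleftrightarrow> (\<exists>z. eqv p q r y (tadd x z))"
proof
  assume "Lle p q r (cls p q r x) (cls p q r y)"
  then obtain x' z where "cls p q r x = cls p q r x'" "cls p q r y = cls p q r (tadd x' z)"
    unfolding Lle_def by blast
  then have "eqv p q r x' x" "eqv p q r y (tadd x' z)" by (auto simp: cls_eq intro: eqv_sym)
  then have "eqv p q r y (tadd x z)" using eqv_tadd eqv_trans by blast
  then show "\<exists>z. eqv p q r y (tadd x z)" by blast
next
  assume "\<exists>z. eqv p q r y (tadd x z)"
  then obtain z where "eqv p q r y (tadd x z)" by blast
  then show "Lle p q r (cls p q r x) (cls p q r y)" unfolding Lle_def cls_eq using eqv_refl by blast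
qed

lemma eqv_self_tadd:
  assumes "0 < p" "0 < r" "eqv p q r x (tadd x z)"
  shows "z = (0, 0, 0)"
proof -
  obtain a b c where z: "z = (a, b, c)" by (cases z) auto
  from assms(3) obtain d :: int where "int a = d * int p" "int b = d * int q" "int c = - d * int r"
    unfolding eqv_def tadd_def z by (auto split: prod.splits)
  moreover have "d * int p \<ge> 0" "- d * int r \<ge> 0" using calculation by linarith+
  then have "d = 0" using assms(1,2) by (smt (verit) mult_pos_pos of_nat_0_less_iff mult_minus_left)
  ultimately show ?thesis unfolding z by simp
qed

lemma Lam_cls: "X \<in> Lam p q r \<longleftrightarrow> (\<exists>x. X = cls p q r x)"
  unfolding Lam_def by auto

lemma tadd_0: "tadd x (0,0,0) = x" "tadd (0,0,0) x = x"
  unfolding tadd_def by (auto split: prod.splits)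

lemma tadd_assoc: "tadd (tadd x y) z = tadd x (tadd y z)"
  unfolding tadd_def by (auto split: prod.splits)

lemma Lle_refl: "X \<in> Lam p q r \<Longrightarrow> Lle p q r X X"
  unfolding Lam_cls using Lle_cls eqv_refl tadd_0 by metis

lemma Lle_trans:
  assumes "X \<in> Lam p q r" "Y \<in> Lam p q r" "Z \<in> Lam p q r" "Lle p q r X Y" "Lle p q r Y Z"
  shows "Lle p q r X Z"
proof -
  obtain x y z where e: "X = cls p q r x" "Y = cls p q r y" "Z = cls p q r z" using assms(1-3) Lam_cls by metis
  obtain u where u: "eqv p q r y (tadd x u)" using assms(4) e Lle_cls by metis
  obtain v where v: "eqv p q r z (tadd y v)" using assms(5) e Lle_cls by metis
  have "eqv p q r z (tadd x (tadd u v))"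
    using eqv_trans[OF v eqv_tadd[OF u]] tadd_assoc by metis
  then show ?thesis using e Lle_cls by blast
qed

lemma Lle_antisym:
  assumes "0 < p" "0 < r" "X \<in> Lam p q r" "Y \<in> Lam p q r" "Lle p q r X Y" "Lle p q r Y X"
  shows "X = Y"
proof -
  obtain x y where e: "X = cls p q r x" "Y = cls p q r y" using assms(3,4) Lam_cls by metis
  obtain u where u: "eqv p q r y (tadd x u)" using assms(5) e Lle_cls by metis
  obtain v where v: "eqv p q r x (tadd y v)" using assms(6) e Lle_cls by metis
  have "eqv p q r x (tadd x (tadd u v))"
    using eqv_trans[OF v eqv_tadd[OF u]] tadd_assoc by metis
  then have "tadd u v = (0,0,0)" using eqv_self_tadd assms(1,2) by blast
  then have "u = (0,0,0)" unfolding tadd_def by (auto split: prod.splits)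
  then have "eqv p q r y x" using u tadd_0 by metis
  then show ?thesis using e cls_eq eqv_sym by metis
qed

lemma Lzero_iff:
  assumes "0 < p" "0 < r"
  shows "cls p q r x = Lzero p q r \<longleftrightarrow> x = (0,0,0)"
proof
  assume "cls p q r x = Lzero p q r"
  then have "eqv p q r (0,0,0) (tadd (0,0,0) x)" unfolding Lzero_def cls_eq tadd_0 by (rule eqv_sym)
  then show "x = (0,0,0)" using eqv_self_tadd assms by blast
qed (simp add: Lzero_def)

lemma Lle_zero: "X \<in> Lam p q r \<Longrightarrow> Lle p q r (Lzero p q r) X"
  unfolding Lam_cls Lzero_def using Lle_cls eqv_refl tadd_0 by metis


lemma tau_mono:
  assumes "0 < p" "x \<le> y"
  shows "tau p s x \<le> tau p s y"
proof (cases "x div p = y div p")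
  case True
  have "x mod p \<le> y mod p"
    using assms True by (metis add_le_cancel_left div_mult_mod_eq)
  then show ?thesis unfolding tau_def using True by simp
next
  case False
  have "x div p \<le> y div p" using assms by (simp add: div_le_mono)
  then have lt: "x div p + 1 \<le> y div p" using False by simp
  have "tau p s x \<le> x div p * s + (s - 1)" unfolding tau_def by simp
  also have "\<dots> \<le> (x div p + 1) * s" by simp
  also have "\<dots> \<le> y div p * s" using lt by (rule mult_right_mono) simp
  also have "\<dots> \<le> tau p s y" unfolding tau_def by simp
  finally show ?thesis .
qed

lemma tau_up:
  assumes "0 < s" "s \<le> p"
  shows "tau s p y = y div s * p + y mod s"
proof -
  have "y mod s < s" using assms by simp
  then have "y mod s \<le> p - 1" using assms by linarith
  then have "min (y mod s) (p - 1) = y mod s" by simp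
  then show ?thesis unfolding tau_def by simp
qed

lemma tau_back:
  assumes "0 < s" "s \<le> p"
  shows "tau p s (tau s p y) = y"
proof -
  have lt: "y mod s < p" using assms by (meson mod_less_divisor order_less_le_trans)
  have p0: "0 < p" using assms by simp
  have d: "(y div s * p + y mod s) div p = y div s" using lt p0 by simp
  have m: "(y div s * p + y mod s) mod p = y mod s" using lt p0 by simp
  have "min (y mod s) (s - 1) = y mod s" using assms by (simp add: less_Suc_eq_le[symmetric])
  then show ?thesis unfolding tau_up[OF assms] unfolding tau_def d m by simp
qed

lemma tau_le:
  assumes "0 < s" "s \<le> p"
  shows "tau s p (tau p s x) \<le> x"
proof -
  define A where "A = x div p"
  define B where "B = min (x mod p) (s - 1)"
  have B: "B < s" "B \<le> x mod p" using assms unfolding B_def by auto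
  have t: "tau p s x = A * s + B" unfolding tau_def A_def B_def by simp
  have d: "(A * s + B) div s = A" "(A * s + B) mod s = B" using B assms by simp_all
  have "tau s p (A * s + B) = A * p + B" unfolding tau_up[OF assms] d ..
  also have "\<dots> \<le> A * p + x mod p" using B by simp
  also have "\<dots> = x" unfolding A_def by simp
  finally show ?thesis unfolding t .
qed

lemma tau_zero:
  assumes "0 < p" "0 < s" "2 \<le> s \<or> p = 1" "tau p s x = 0"
  shows "x = 0"
proof -
  have "x div p * s = 0" "min (x mod p) (s - 1) = 0" using assms(4) unfolding tau_def by simp_all
  then have "x div p = 0" using assms(2) by simp
  moreover have "x mod p = 0"
  proof (cases "p = 1")
    case True then show ?thesis by simp
  next
    case False then have "s - 1 \<noteq> 0" using assms(3) by simp
    then show ?thesis using \<open>min (x mod p) (s - 1) = 0\<close> by simp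
  qed
  ultimately show ?thesis by (metis div_mult_mod_eq mult_0 add_0)
qed

lemma tau_zero':
  assumes "0 < s" "s \<le> p" "tau s p y = 0"
  shows "y = 0"
proof -
  have "y div s * p + y mod s = 0" using assms tau_up by metis
  then have "y div s = 0" "y mod s = 0" using assms by simp_all
  then show ?thesis by (metis div_mult_mod_eq mult_0 add_0)
qed

lemma tau_shift:
  assumes "0 < p" "int m' = int m + d * int p"
  shows "int (tau p s m') = int (tau p s m) + d * int s"
proof -
  have md: "int m' mod int p = int m mod int p" using assms by simp
  have dd: "int m' div int p = int m div int p + d" using assms by simp
  have "m' mod p = m mod p" using md by (metis of_nat_eq_iff zmod_int)
  moreover have "int (m' div p) = int (m div p) + d" using dd by (simp add: zdiv_int)
  ultimately show ?thesis unfolding tau_def by (simp add: algebra_simps)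
qed


definition tauv :: "nat \<Rightarrow> nat \<Rightarrow> nat \<Rightarrow> nat \<Rightarrow> nat \<Rightarrow> nat \<Rightarrow> triple \<Rightarrow> triple" where
  "tauv p q r s t u x = (tau p s (fst x), tau q t (fst (snd x)), tau r u (snd (snd x)))"

lemma eqv_tauv:
  assumes "0 < p" "0 < q" "0 < r" "eqv p q r x y"
  shows "eqv s t u (tauv p q r s t u x) (tauv p q r s t u y)"
proof -
  from assms(4) obtain d :: int where d: "int (fst y) = int (fst x) + d * int p"
    "int (fst (snd y)) = int (fst (snd x)) + d * int q" "int (snd (snd y)) = int (snd (snd x)) + (- d) * int r"
    unfolding eqv_def by auto
  have "int (tau p s (fst y)) = int (tau p s (fst x)) + d * int s" by (rule tau_shift[OF assms(1) d(1)])
  moreover have "int (tau q t (fst (snd y))) = int (tau q t (fst (snd x))) + d * int t" by (rule tau_shift[OF assms(2) d(2)])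
  moreover have "int (tau r u (snd (snd y))) = int (tau r u (snd (snd x))) + (- d) * int u" by (rule tau_shift[OF assms(3) d(3)])
  ultimately show ?thesis unfolding eqv_def tauv_def by (intro exI[of _ d]) simp
qed

lemma transition_cls:
  assumes "0 < p" "0 < q" "0 < r"
  shows "transition p q r s t u (cls p q r x) = cls s t u (tauv p q r s t u x)"
proof -
  define y where "y = (SOME y. y \<in> cls p q r x)"
  have "y \<in> cls p q r x" unfolding y_def by (rule someI[of _ x]) (simp add: mem_cls eqv_refl)
  then have e: "eqv p q r x y" by (simp add: mem_cls)
  have "transition p q r s t u (cls p q r x) = cls s t u (tauv p q r s t u y)"
    unfolding transition_def y_def[symmetric] tauv_def by (cases y) simp
  also have "\<dots> = cls s t u (tauv p q r s t u x)"
    unfolding cls_eq by (rule eqv_sym, rule eqv_tauv[OF assms e])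
  finally show ?thesis .
qed

lemma tadd_ex:
  assumes "fst a \<le> fst b" "fst (snd a) \<le> fst (snd b)" "snd (snd a) \<le> snd (snd b)"
  shows "\<exists>w. b = tadd a w"
  using assms by (intro exI[of _ "(fst b - fst a, fst (snd b) - fst (snd a), snd (snd b) - snd (snd a))"])
    (auto simp: tadd_def split: prod.splits)

lemma T_mono:
  assumes "0 < p" "0 < q" "0 < r" "X \<in> Lam p q r" "Y \<in> Lam p q r" "Lle p q r X Y"
  shows "Lle s t u (transition p q r s t u X) (transition p q r s t u Y)"
proof -
  obtain x y where e: "X = cls p q r x" "Y = cls p q r y" using assms(4,5) Lam_cls by metis
  obtain z where z: "eqv p q r y (tadd x z)" using assms(6) e Lle_cls by metis
  have "\<exists>w. tauv p q r s t u (tadd x z) = tadd (tauv p q r s t u x) w"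
    by (rule tadd_ex) (auto simp: tauv_def tadd_def split: prod.splits intro!: tau_mono assms(1-3))
  then obtain w where w: "tauv p q r s t u (tadd x z) = tadd (tauv p q r s t u x) w" by blast
  have "eqv s t u (tauv p q r s t u y) (tadd (tauv p q r s t u x) w)"
    using eqv_tauv[OF assms(1-3) z, where s=s and t=t and u=u] w by simp
  then show ?thesis unfolding e transition_cls[OF assms(1-3)] Lle_cls by blast
qed

lemma T_back:
  assumes "0 < s" "0 < t" "0 < u" "s \<le> p" "t \<le> q" "u \<le> r" "Y \<in> Lam s t u"
  shows "transition p q r s t u (transition s t u p q r Y) = Y"
proof -
  have pos: "0 < p" "0 < q" "0 < r" using assms by auto
  obtain y where e: "Y = cls s t u y" using assms(7) Lam_cls by metis
  have "tauv p q r s t u (tauv s t u p q r y) = y"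
    unfolding tauv_def using tau_back assms(1-6) by (cases y) simp
  then show ?thesis unfolding e transition_cls[OF assms(1-3)] transition_cls[OF pos] by simp
qed

lemma T_le:
  assumes "0 < s" "0 < t" "0 < u" "s \<le> p" "t \<le> q" "u \<le> r" "X \<in> Lam p q r"
  shows "Lle p q r (transition s t u p q r (transition p q r s t u X)) X"
proof -
  have pos: "0 < p" "0 < q" "0 < r" using assms by auto
  obtain x where e: "X = cls p q r x" using assms(7) Lam_cls by metis
  have "\<exists>w. x = tadd (tauv s t u p q r (tauv p q r s t u x)) w"
    by (rule tadd_ex) (simp_all add: tauv_def tau_le assms(1-6))
  then obtain w where "x = tadd (tauv s t u p q r (tauv p q r s t u x)) w" by blast
  then have "eqv p q r x (tadd (tauv s t u p q r (tauv p q r s t u x)) w)" using eqv_refl by metis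
  then show ?thesis unfolding e transition_cls[OF assms(1-3)] transition_cls[OF pos] Lle_cls by blast
qed

lemma T_nz:
  assumes "0 < p" "0 < q" "0 < r" "0 < s" "0 < t" "0 < u"
    "2 \<le> s \<or> p = 1" "2 \<le> t \<or> q = 1" "2 \<le> u \<or> r = 1"
    "X \<in> Lam p q r" "X \<noteq> Lzero p q r"
  shows "transition p q r s t u X \<noteq> Lzero s t u"
proof -
  obtain a b c where e: "X = cls p q r (a, b, c)" using assms(10) Lam_cls by (metis prod_cases3)
  have "(a, b, c) \<noteq> (0,0,0)" using assms(11) unfolding e Lzero_iff[OF assms(1,3)] .
  then have "(tau p s a, tau q t b, tau r u c) \<noteq> (0,0,0)"
    using tau_zero[OF assms(1,4,7), of a] tau_zero[OF assms(2,5,8), of b] tau_zero[OF assms(3,6,9), of c]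
    by auto
  then have "cls s t u (tau p s a, tau q t b, tau r u c) \<noteq> Lzero s t u"
    unfolding Lzero_iff[OF assms(4,6)] .
  then show ?thesis unfolding e transition_cls[OF assms(1-3)] tauv_def by simp
qed

lemma T'_nz:
  assumes "0 < s" "0 < t" "0 < u" "s \<le> p" "t \<le> q" "u \<le> r"
    "Y \<in> Lam s t u" "Y \<noteq> Lzero s t u"
  shows "transition s t u p q r Y \<noteq> Lzero p q r"
proof -
  have pos: "0 < p" "0 < q" "0 < r" using assms by auto
  obtain a b c where e: "Y = cls s t u (a, b, c)" using assms(7) Lam_cls by (metis prod_cases3)
  have "(a, b, c) \<noteq> (0,0,0)" using assms(8) unfolding e Lzero_iff[OF assms(1,3)] .
  then have "(tau s p a, tau t q b, tau u r c) \<noteq> (0,0,0)"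
    using tau_zero'[OF assms(1,4), of a] tau_zero'[OF assms(2,5), of b] tau_zero'[OF assms(3,6), of c]
    by auto
  then have "cls p q r (tau s p a, tau t q b, tau u r c) \<noteq> Lzero p q r"
    unfolding Lzero_iff[OF pos(1,3)] .
  then show ?thesis unfolding e transition_cls[OF assms(1-3)] tauv_def by simp
qed

lemma T_Lam: "0 < p \<Longrightarrow> 0 < q \<Longrightarrow> 0 < r \<Longrightarrow> X \<in> Lam p q r \<Longrightarrow> transition p q r s t u X \<in> Lam s t u"
  using transition_cls Lam_cls by metis


lemma fin_below:
  assumes "0 < p" "0 < r"
  shows "finite {X \<in> Lam p q r. Lle p q r X (cls p q r (m0, n0, k0))}"
proof -
  define B where "B = {0..m0 + k0*p} \<times> {0..n0 + k0*q} \<times> {0..k0 + m0*r}"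
  have "{X \<in> Lam p q r. Lle p q r X (cls p q r (m0, n0, k0))} \<subseteq> cls p q r ` B"
  proof
    fix X assume X: "X \<in> {X \<in> Lam p q r. Lle p q r X (cls p q r (m0, n0, k0))}"
    then obtain a b c where e: "X = cls p q r (a, b, c)" using Lam_cls by (metis (no_types, lifting) mem_Collect_eq prod_cases3)
    then obtain z where "eqv p q r (m0, n0, k0) (tadd (a, b, c) z)" using X Lle_cls by auto
    then obtain z1 z2 z3 and d :: int where d: "int (a + z1) = int m0 + d * int p"
      "int (b + z2) = int n0 + d * int q" "int (c + z3) = int k0 - d * int r"
      unfolding eqv_def tadd_def by (cases z) auto
    have dr: "d * int r \<le> int k0" using d(3) by simp
    have dk: "d \<le> int k0"
    proof (cases "d \<le> 0")
      case False
      then have "d \<le> d * int r" using assms(2) by (simp add: mult_le_cancel_left1)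
      then show ?thesis using dr by linarith
    qed simp
    have dp: "- d * int p \<le> int m0" using d(1) by simp
    have dm: "- d \<le> int m0"
    proof (cases "- d \<le> 0")
      case False
      then have "- d \<le> - d * int p" using assms(1) by (simp add: mult_le_cancel_left1)
      then show ?thesis using dp by linarith
    qed simp
    have "d * int p \<le> int k0 * int p" using dk by (simp add: mult_right_mono)
    then have "int a \<le> int m0 + int k0 * int p" using d(1) unfolding of_nat_add by linarith
    then have "a \<le> m0 + k0*p" by (metis of_nat_add of_nat_mult of_nat_le_iff)
    moreover have "d * int q \<le> int k0 * int q" using dk by (simp add: mult_right_mono)
    then have "int b \<le> int n0 + int k0 * int q" using d(2) unfolding of_nat_add by linarith
    then have "b \<le> n0 + k0*q" by (metis of_nat_add of_nat_mult of_nat_le_iff)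
    moreover have "- d * int r \<le> int m0 * int r" using mult_right_mono[OF dm, of "int r"] by simp
    then have "int c \<le> int k0 + int m0 * int r" using d(3) unfolding of_nat_add by linarith
    then have "c \<le> k0 + m0*r" by (metis of_nat_add of_nat_mult of_nat_le_iff)
    ultimately have "(a, b, c) \<in> B" unfolding B_def by auto
    then show "X \<in> cls p q r ` B" using e by blast
  qed
  moreover have "finite B" unfolding B_def by simp
  ultimately show ?thesis by (meson finite_imageI finite_subset)
qed

lemma memP:
  "X \<in> open_interval (Lam p q r) (Lless p q r) (Lzero p q r) lam \<longleftrightarrow>
     X \<in> Lam p q r \<and> X \<noteq> Lzero p q r \<and> Lle p q r X lam \<and> X \<noteq> lam"
  unfolding open_interval_def Lless_def using Lle_zero by fastforce

lemma finP:
  assumes "0 < p" "0 < r" "lam \<in> Lam p q r"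
  shows "finite (open_interval (Lam p q r) (Lless p q r) (Lzero p q r) lam)"
proof -
  obtain m0 n0 k0 where e: "lam = cls p q r (m0, n0, k0)" using assms(3) Lam_cls by (metis prod_cases3)
  show ?thesis
    by (rule finite_subset[OF _ fin_below[OF assms(1,2), of q m0 n0 k0]]) (auto simp: memP e)
qed

lemma main_gen:
  assumes s: "0 < s" "0 < t" "0 < u" "s \<le> p" "t \<le> q" "u \<le> r"
    and Z: "2 \<le> s \<or> p = 1" "2 \<le> t \<or> q = 1" "2 \<le> u \<or> r = 1"
    and lam: "lam \<in> Lplus p q r"
  shows "(if transition s t u p q r (transition p q r s t u lam) = lam
          then frobenius_complex p q r lam homotopy_equivalent_space
                 frobenius_complex s t u (transition p q r s t u lam)
          else frobenius_complex p q r lam homotopy_equivalent_space point_space)"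
proof -
  have pos: "0 < p" "0 < q" "0 < r" using s by auto
  define T where "T = transition p q r s t u"
  define T' where "T' = transition s t u p q r"
  define P where "P = open_interval (Lam p q r) (Lless p q r) (Lzero p q r) lam"
  define Q where "Q = open_interval (Lam s t u) (Lless s t u) (Lzero s t u) (T lam)"
  have lamL: "lam \<in> Lam p q r" "lam \<noteq> Lzero p q r" using lam unfolding Lplus_def by auto
  have TL: "\<And>X. X \<in> Lam p q r \<Longrightarrow> T X \<in> Lam s t u" unfolding T_def using T_Lam pos by blast
  have T'L: "\<And>X. X \<in> Lam s t u \<Longrightarrow> T' X \<in> Lam p q r" unfolding T'_def using T_Lam s by blast
  have Tm: "\<And>X Y. X \<in> Lam p q r \<Longrightarrow> Y \<in> Lam p q r \<Longrightarrow> Lle p q r X Y \<Longrightarrow> Lle s t u (T X) (T Y)"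
    unfolding T_def using T_mono pos by blast
  have T'm: "\<And>X Y. X \<in> Lam s t u \<Longrightarrow> Y \<in> Lam s t u \<Longrightarrow> Lle s t u X Y \<Longrightarrow> Lle p q r (T' X) (T' Y)"
    unfolding T'_def using T_mono s by blast
  have Tb: "\<And>Y. Y \<in> Lam s t u \<Longrightarrow> T (T' Y) = Y" unfolding T_def T'_def using T_back s by blast
  have Tle: "\<And>X. X \<in> Lam p q r \<Longrightarrow> Lle p q r (T' (T X)) X" unfolding T_def T'_def using T_le s by blast
  have Tnz: "\<And>X. X \<in> Lam p q r \<Longrightarrow> X \<noteq> Lzero p q r \<Longrightarrow> T X \<noteq> Lzero s t u"
    unfolding T_def using T_nz[OF pos s(1-3) Z] by blast
  have T'nz: "\<And>Y. Y \<in> Lam s t u \<Longrightarrow> Y \<noteq> Lzero s t u \<Longrightarrow> T' Y \<noteq> Lzero p q r"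
    unfolding T'_def using T'_nz[OF s] by blast
  have rf: "\<And>x. x\<in>P \<Longrightarrow> Lle p q r x x" unfolding P_def memP using Lle_refl by blast
  have tr: "\<And>x y z. x\<in>P \<Longrightarrow> y\<in>P \<Longrightarrow> z\<in>P \<Longrightarrow> Lle p q r x y \<Longrightarrow> Lle p q r y z \<Longrightarrow> Lle p q r x z"
    unfolding P_def memP using Lle_trans by blast
  have an: "\<And>x y. x\<in>P \<Longrightarrow> y\<in>P \<Longrightarrow> Lle p q r x y \<Longrightarrow> Lle p q r y x \<Longrightarrow> x = y"
    unfolding P_def memP using Lle_antisym pos by blast
  have ant: "\<And>x y. x\<in>Lam p q r \<Longrightarrow> y\<in>Lam p q r \<Longrightarrow> Lle p q r x y \<Longrightarrow> Lle p q r y x \<Longrightarrow> x = y"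
    using Lle_antisym pos by blast
  have fP: "finite P" unfolding P_def by (rule finP[OF pos(1,3) lamL(1)])
  have fprops: "T' (T X) \<in> P" if X: "X \<in> P" for X
  proof -
    have XL: "X \<in> Lam p q r" "X \<noteq> Lzero p q r" "Lle p q r X lam" "X \<noteq> lam" using X unfolding P_def memP by auto
    have L: "T' (T X) \<in> Lam p q r" using XL TL T'L by blast
    have nz: "T' (T X) \<noteq> Lzero p q r" using XL TL T'L Tnz T'nz by blast
    have le: "Lle p q r (T' (T X)) lam" using Lle_trans[OF L XL(1) lamL(1) Tle[OF XL(1)] XL(3)] .
    have ne: "T' (T X) \<noteq> lam"
    proof
      assume "T' (T X) = lam"
      then have "Lle p q r lam X" using Tle[OF XL(1)] by simp
      then show False using ant[OF XL(1) lamL(1) XL(3)] XL(4) by blast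
    qed
    show ?thesis unfolding P_def memP using L nz le ne by blast
  qed
  show ?thesis
  proof (cases "T' (T lam) = lam")
    case True
    have lamQ: "T lam \<in> Lam s t u" using TL lamL by blast
    have fQ: "finite Q" unfolding Q_def by (rule finP[OF s(1,3) lamQ])
    have gQ: "T ` P \<subseteq> Q"
    proof
      fix Y assume "Y \<in> T ` P"
      then obtain X where X: "X \<in> P" "Y = T X" by blast
      have XL: "X \<in> Lam p q r" "X \<noteq> Lzero p q r" "Lle p q r X lam" "X \<noteq> lam" using X unfolding P_def memP by auto
      have "T X \<noteq> T lam"
      proof
        assume "T X = T lam"
        then have "T' (T X) = lam" using True by simp
        then have "Lle p q r lam X" using Tle[OF XL(1)] by simp
        then show False using ant[OF XL(1) lamL(1) XL(3)] XL(4) by blast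
      qed
      then show "Y \<in> Q" unfolding Q_def memP X(2) using TL Tnz Tm XL lamL by blast
    qed
    have hP: "T' ` Q \<subseteq> P"
    proof
      fix X assume "X \<in> T' ` Q"
      then obtain Y where Y: "Y \<in> Q" "X = T' Y" by blast
      have YL: "Y \<in> Lam s t u" "Y \<noteq> Lzero s t u" "Lle s t u Y (T lam)" "Y \<noteq> T lam" using Y unfolding Q_def memP by auto
      have le: "Lle p q r (T' Y) lam" using T'm[OF YL(1) lamQ YL(3)] True by simp
      have "T' Y \<noteq> lam" using Tb[OF YL(1)] YL(4) by metis
      then show "X \<in> P" unfolding P_def memP Y(2) using T'L T'nz YL le by blast
    qed
    have "order_complex_realization P (Lle p q r) homotopy_equivalent_space order_complex_realization Q (Lle s t u)"
    proof (rule he_lemma[OF fP fQ _ _ _ _ _ _ gQ hP])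
      show "\<And>x. x \<in> P \<Longrightarrow> Lle p q r x x" by (rule rf)
      show "\<And>x y z. x\<in>P \<Longrightarrow> y\<in>P \<Longrightarrow> z\<in>P \<Longrightarrow> Lle p q r x y \<Longrightarrow> Lle p q r y z \<Longrightarrow> Lle p q r x z" by (rule tr)
      show "\<And>x y. x\<in>P \<Longrightarrow> y\<in>P \<Longrightarrow> Lle p q r x y \<Longrightarrow> Lle p q r y x \<Longrightarrow> x = y" by (rule an)
      show "\<And>x. x \<in> Q \<Longrightarrow> Lle s t u x x" unfolding Q_def memP using Lle_refl by blast
      show "\<And>x y z. x\<in>Q \<Longrightarrow> y\<in>Q \<Longrightarrow> z\<in>Q \<Longrightarrow> Lle s t u x y \<Longrightarrow> Lle s t u y z \<Longrightarrow> Lle s t u x z"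
        unfolding Q_def memP using Lle_trans by blast
      show "\<And>x y. x\<in>Q \<Longrightarrow> y\<in>Q \<Longrightarrow> Lle s t u x y \<Longrightarrow> Lle s t u y x \<Longrightarrow> x = y"
        unfolding Q_def memP using Lle_antisym s by blast
      show "\<And>x y. x\<in>P \<Longrightarrow> y\<in>P \<Longrightarrow> Lle p q r x y \<Longrightarrow> Lle s t u (T x) (T y)"
        unfolding P_def memP using Tm by blast
      show "\<And>x y. x\<in>Q \<Longrightarrow> y\<in>Q \<Longrightarrow> Lle s t u x y \<Longrightarrow> Lle p q r (T' x) (T' y)"
        unfolding Q_def memP using T'm by blast
      show "\<And>y. y \<in> Q \<Longrightarrow> T (T' y) = y" unfolding Q_def memP using Tb by blast
      show "\<And>x. x \<in> P \<Longrightarrow> Lle p q r (T' (T x)) x" unfolding P_def memP using Tle by blast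
    qed
    then show ?thesis using True unfolding frobenius_complex_def P_def Q_def T_def T'_def by simp
  next
    case False
    have mP: "T' (T lam) \<in> P"
    proof -
      have L: "T' (T lam) \<in> Lam p q r" using lamL TL T'L by blast
      have nz: "T' (T lam) \<noteq> Lzero p q r" using lamL TL T'L Tnz T'nz by blast
      show ?thesis unfolding P_def memP using L nz Tle[OF lamL(1)] False by blast
    qed
    have "order_complex_realization P (Lle p q r) homotopy_equivalent_space point_space"
    proof (rule contr_lemma[OF fP _ _ _ _ _ _ mP])
      show "\<And>x. x \<in> P \<Longrightarrow> Lle p q r x x" by (rule rf)
      show "\<And>x y z. x\<in>P \<Longrightarrow> y\<in>P \<Longrightarrow> z\<in>P \<Longrightarrow> Lle p q r x y \<Longrightarrow> Lle p q r y z \<Longrightarrow> Lle p q r x z" by (rule tr)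
      show "\<And>x y. x\<in>P \<Longrightarrow> y\<in>P \<Longrightarrow> Lle p q r x y \<Longrightarrow> Lle p q r y x \<Longrightarrow> x = y" by (rule an)
      show "(\<lambda>X. T' (T X)) ` P \<subseteq> P" using fprops by blast
      show "\<And>x y. x\<in>P \<Longrightarrow> y\<in>P \<Longrightarrow> Lle p q r x y \<Longrightarrow> Lle p q r (T' (T x)) (T' (T y))"
        unfolding P_def memP using Tm T'm TL by blast
      show "\<And>x. x \<in> P \<Longrightarrow> Lle p q r (T' (T x)) x" unfolding P_def memP using Tle by blast
      show "\<And>x. x \<in> P \<Longrightarrow> Lle p q r (T' (T x)) (T' (T lam))"
        unfolding P_def memP using Tm T'm TL lamL by blast
    qed
    then show ?thesis using False unfolding frobenius_complex_def P_def T_def T'_def by simp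
  qed
qed


theorem theorem3p4:
  fixes p q r :: nat and lam :: "triple set"
  assumes "0 < p" and "p \<le> q" and "2 \<le> r" and "lam \<in> Lplus p q r"
  shows "(p = 1 \<and> q = 1 \<longrightarrow>
           (if transition 1 1 2 1 1 r (transition 1 1 r 1 1 2 lam) = lam
            then frobenius_complex 1 1 r lam homotopy_equivalent_space
                   frobenius_complex 1 1 2 (transition 1 1 r 1 1 2 lam)
            else frobenius_complex 1 1 r lam homotopy_equivalent_space point_space))
       \<and> (p = 1 \<and> 2 \<le> q \<longrightarrow>
           (if transition 1 2 2 1 q r (transition 1 q r 1 2 2 lam) = lam
            then frobenius_complex 1 q r lam homotopy_equivalent_space
                   frobenius_complex 1 2 2 (transition 1 q r 1 2 2 lam)
            else frobenius_complex 1 q r lam homotopy_equivalent_space point_space))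
       \<and> (2 \<le> p \<longrightarrow>
           (if transition 2 2 2 p q r (transition p q r 2 2 2 lam) = lam
            then frobenius_complex p q r lam homotopy_equivalent_space
                   frobenius_complex 2 2 2 (transition p q r 2 2 2 lam)
            else frobenius_complex p q r lam homotopy_equivalent_space point_space))"
  proof (intro conjI impI)
  assume h: "p = 1 \<and> q = 1"
  then have l: "lam \<in> Lplus 1 1 r" using assms(4) by simp
  show "if transition 1 1 2 1 1 r (transition 1 1 r 1 1 2 lam) = lam
            then frobenius_complex 1 1 r lam homotopy_equivalent_space
                   frobenius_complex 1 1 2 (transition 1 1 r 1 1 2 lam)
            else frobenius_complex 1 1 r lam homotopy_equivalent_space point_space"
    by (rule main_gen[where s=1 and t=1 and u=2 and p=1 and q=1 and r=r]) (use l assms(3) in auto)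
next
  assume h: "p = 1 \<and> 2 \<le> q"
  then have l: "lam \<in> Lplus 1 q r" using assms(4) by simp
  show "if transition 1 2 2 1 q r (transition 1 q r 1 2 2 lam) = lam
            then frobenius_complex 1 q r lam homotopy_equivalent_space
                   frobenius_complex 1 2 2 (transition 1 q r 1 2 2 lam)
            else frobenius_complex 1 q r lam homotopy_equivalent_space point_space"
    by (rule main_gen[where s=1 and t=2 and u=2 and p=1 and q=q and r=r]) (use l h assms(3) in auto)
next
  assume h: "2 \<le> p"
  show "if transition 2 2 2 p q r (transition p q r 2 2 2 lam) = lam
            then frobenius_complex p q r lam homotopy_equivalent_space
                   frobenius_complex 2 2 2 (transition p q r 2 2 2 lam)
            else frobenius_complex p q r lam homotopy_equivalent_space point_space"
    by (rule main_gen[where s=2 and t=2 and u=2 and p=p and q=q and r=r]) (use h assms in auto)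
qed

end
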